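(* Let $L$ be a distributive lattice with minimum $0_L$ and maximum $1_L$, and let $K_L=\{x^*\in L^*:\max\{|x^*(0_L)|,|x^*(1_L)|\}=1\}$ with the product (pointwise) topology. If $U\subseteq K_L$ is open, $x_0^*\in U$ and $\varepsilon>0$, then there exists $g\in\mathrm{FVL}\langle L\rangle$ with $g\ge0$ such that $g(x_0^* )>0$, $g\le\varepsilon$ on $U$, and $g=0$ on $K_L\setminus U$.
   Context: $L^*$ is the set of all lattice homomorphisms $x^*:L\to[-1,1]$; for $x\in L$, $\delta_x:L^*\to\mathbb R$ is $\delta_x(x^* )=x^*(x)$. $\mathrm{FVL}\langle L\rangle$ is the vector sublattice of $\mathbb R^{L^*}$ (pointwise operations) generated by $\{\delta_x:x\in L\}$. $\mathrm{FBL}\langle L\rangle$ is its norm closure with respect to the norm $\|f\|=\sup\{\sum_{i=1}^m|f(x_i^* )|: m\in\mathbb N,\ x_i^*\in L^*,\ \sup_{x\in L}\sum_{i=1}^m|x_i^*(x)|\le1\}$ within positively homogeneous functions on $L^*$. *)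

theory Defs
  imports "HOL-Analysis.Analysis"
begin

definition lat_dual :: "('a::lattice \<Rightarrow> real) set" where
  "lat_dual = {xs. (\<forall>x. xs x \<in> {-1..1}) \<and>
                   (\<forall>x y. xs (sup x y) = max (xs x) (xs y)) \<and>
                   (\<forall>x y. xs (inf x y) = min (xs x) (xs y))}"

definition delta :: "'a \<Rightarrow> ('a \<Rightarrow> real) \<Rightarrow> real" where
  "delta x = (\<lambda>xs. xs x)"

inductive_set FVL :: "(('a::lattice \<Rightarrow> real) \<Rightarrow> real) set" where
  gen: "delta x \<in> FVL"
| add: "f \<in> FVL \<Longrightarrow> g \<in> FVL \<Longrightarrow> (\<lambda>xs. f xs + g xs) \<in> FVL"
| smult: "f \<in> FVL \<Longrightarrow> (\<lambda>xs. c * f xs) \<in> FVL"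
| max: "f \<in> FVL \<Longrightarrow> g \<in> FVL \<Longrightarrow> (\<lambda>xs. max (f xs) (g xs)) \<in> FVL"
| min: "f \<in> FVL \<Longrightarrow> g \<in> FVL \<Longrightarrow> (\<lambda>xs. min (f xs) (g xs)) \<in> FVL"

definition K_L :: "('a::bounded_lattice \<Rightarrow> real) set" where
  "K_L = {xs \<in> lat_dual. max \<bar>xs bot\<bar> \<bar>xs top\<bar> = 1}"

end

theory Submission
  imports Defs
begin

lemma FVL_zero: "(\<lambda>xs. 0) \<in> FVL"
  using FVL.smult[OF FVL.gen, of 0] by simp

lemma FVL_neg: "f \<in> FVL \<Longrightarrow> (\<lambda>xs. - f xs) \<in> FVL"
  using FVL.smult[of f "-1"] by simp

lemma FVL_diff: "f \<in> FVL \<Longrightarrow> g \<in> FVL \<Longrightarrow> (\<lambda>xs. f xs - g xs) \<in> FVL"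
  using FVL.add[OF _ FVL_neg, of f g] by simp

lemma FVL_abs: "f \<in> FVL \<Longrightarrow> (\<lambda>xs. \<bar>f xs\<bar>) \<in> FVL"
proof -
  assume "f \<in> FVL"
  moreover have "(\<lambda>xs. \<bar>f xs\<bar>) = (\<lambda>xs. max (f xs) (- f xs))" by (auto simp: abs_real_def max_def)
  ultimately show ?thesis using FVL.max[OF _ FVL_neg, of f f] by simp
qed

lemma FVL_sum: "finite A \<Longrightarrow> (\<And>a. a \<in> A \<Longrightarrow> f a \<in> FVL) \<Longrightarrow> (\<lambda>xs. \<Sum>a\<in>A. f a xs) \<in> FVL"
proof (induction A rule: finite_induct)
  case empty
  then show ?case using FVL_zero by simp
next
  case (insert x F)
  then show ?case using FVL.add[of "f x" "\<lambda>xs. \<Sum>a\<in>F. f a xs"] by simp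
qed

lemma nbhd:
  fixes T :: "('a \<Rightarrow> real) set"
  assumes "open T" "x0 \<in> T" "\<epsilon> > 0"
  shows "\<exists>A \<delta>. finite A \<and> \<delta> > 0 \<and> \<delta> \<le> \<epsilon> \<and>
     (\<forall>y. (\<forall>a\<in>A. \<bar>y a - x0 a\<bar> < \<delta>) \<longrightarrow> y \<in> T)"
proof -
  obtain X where X: "x0 \<in> (\<Pi>\<^sub>E i\<in>UNIV. X i)" "\<forall>i. openin euclidean (X i)"
    "finite {i. X i \<noteq> topspace euclidean}" "(\<Pi>\<^sub>E i\<in>UNIV. X i) \<subseteq> T"
    using product_topology_open_contains_basis[of "\<lambda>i. euclidean" UNIV T x0] assms
    unfolding open_fun_def by blast
  define A where "A = {i. X i \<noteq> UNIV}"
  have fA: "finite A" using X(3) by (simp add: A_def)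
  have "\<forall>a\<in>A. \<exists>r>0. ball (x0 a) r \<subseteq> X a"
    using X(1,2) by (metis PiE_iff UNIV_I open_contains_ball open_openin)
  then obtain r where r: "\<And>a. a \<in> A \<Longrightarrow> r a > 0 \<and> ball (x0 a) (r a) \<subseteq> X a"
    by metis
  define \<delta> where "\<delta> = Min (insert \<epsilon> (r ` A))"
  have dpos: "\<delta> > 0" unfolding \<delta>_def using fA r assms(3) by auto
  have dle: "\<delta> \<le> \<epsilon>" "\<And>a. a \<in> A \<Longrightarrow> \<delta> \<le> r a" unfolding \<delta>_def using fA by auto
  have "y \<in> T" if H: "\<forall>a\<in>A. \<bar>y a - x0 a\<bar> < \<delta>" for y
  proof -
    have "y i \<in> X i" for i
    proof (cases "i \<in> A")
      case True
      then have "y i \<in> ball (x0 i) (r i)" using H dle(2)[OF True]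
        by (auto simp: dist_real_def abs_minus_commute)
      then show ?thesis using r[OF True] by blast
    next
      case False
      then show ?thesis by (simp add: A_def)
    qed
    then have "y \<in> (\<Pi>\<^sub>E i\<in>UNIV. X i)" by auto
    then show ?thesis using X(4) by blast
  qed
  then show ?thesis using fA dpos dle(1) by blast
qed

theorem mainTheorem6:
  fixes U :: "('a::{distrib_lattice, bounded_lattice} \<Rightarrow> real) set"
    and x0 :: "'a \<Rightarrow> real" and \<epsilon> :: real
  assumes "openin (top_of_set K_L) U"
    and "x0 \<in> U"
    and "\<epsilon> > 0"
  shows "\<exists>g \<in> FVL. (\<forall>xs \<in> lat_dual. g xs \<ge> 0) \<and> g x0 > 0 \<and>
           (\<forall>xs \<in> U. g xs \<le> \<epsilon>) \<and> (\<forall>xs \<in> K_L - U. g xs = 0)"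
proof -
  obtain T where T: "open T" "U = K_L \<inter> T" using assms(1) by (auto simp: openin_open)
  have x0T: "x0 \<in> T" and x0K: "x0 \<in> K_L" using assms(2) T by auto
  obtain A \<delta> where Ad: "finite A" "\<delta> > 0" "\<delta> \<le> \<epsilon>"
    "\<And>y. (\<forall>a\<in>A. \<bar>y a - x0 a\<bar> < \<delta>) \<Longrightarrow> y \<in> T"
    using nbhd[OF T(1) x0T assms(3)] by blast
  define N where "N = (\<lambda>xs::'a \<Rightarrow> real. max \<bar>xs bot\<bar> \<bar>xs top\<bar>)"
  define h where "h = (\<lambda>xs. \<delta> * N xs - (\<Sum>a\<in>A. \<bar>xs a - x0 a * N xs\<bar>))"
  define g where "g = (\<lambda>xs. max (h xs) 0)"
  have NF: "N \<in> FVL" unfolding N_def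
    using FVL.max[OF FVL_abs[OF FVL.gen] FVL_abs[OF FVL.gen], of bot top]
    by (simp add: delta_def)
  have hF: "h \<in> FVL" unfolding h_def
    apply (rule FVL_diff)
     apply (rule FVL.smult[OF NF])
    apply (rule FVL_sum[OF Ad(1)])
    apply (rule FVL_abs)
    apply (rule FVL_diff)
     apply (rule FVL.gen[unfolded delta_def])
    apply (rule FVL.smult[OF NF])
    done
  have gF: "g \<in> FVL" unfolding g_def using FVL.max[OF hF FVL_zero] .
  have NK: "N xs = 1" if "xs \<in> K_L" for xs using that by (simp add: K_L_def N_def)
  have Nle: "N xs \<le> 1" if "xs \<in> lat_dual" for xs
    using that unfolding lat_dual_def N_def by (auto simp: abs_le_iff)
  have hle: "h xs \<le> \<delta>" if "xs \<in> lat_dual" for xs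
  proof -
    have "h xs \<le> \<delta> * N xs" unfolding h_def by (simp add: sum_nonneg)
    also have "\<dots> \<le> \<delta>" using Nle[OF that] Ad(2) by simp
    finally show ?thesis .
  qed
  have KL: "K_L \<subseteq> lat_dual" by (auto simp: K_L_def)
  have "g x0 > 0" unfolding g_def h_def using NK[OF x0K] Ad(2) by simp
  moreover have "\<forall>xs \<in> lat_dual. g xs \<ge> 0" unfolding g_def by simp
  moreover have "\<forall>xs \<in> U. g xs \<le> \<epsilon>"
    using hle Ad(2,3) T(2) KL unfolding g_def by fastforce
  moreover have "g xs = 0" if xs: "xs \<in> K_L - U" for xs
  proof -
    have "xs \<notin> T" using xs T(2) by auto
    then obtain a where a: "a \<in> A" "\<bar>xs a - x0 a\<bar> \<ge> \<delta>" using Ad(4) by force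
    have N1: "N xs = 1" using xs NK by auto
    have "\<bar>xs a - x0 a * N xs\<bar> \<le> (\<Sum>a\<in>A. \<bar>xs a - x0 a * N xs\<bar>)"
      by (rule member_le_sum[OF a(1)]) (auto simp: Ad(1))
    then have "h xs \<le> 0" unfolding h_def using a(2) N1 by simp
    then show ?thesis unfolding g_def by simp
  qed
  ultimately show ?thesis using gF by blast
qed

end
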